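(* Let $K\subseteq\mathbb{R}^n$ be a closed convex set of dimension at least $2$, let $O\in\partial K$, let $r>0$, and suppose the level set $L=S_r(O)\cap K$ contains no $O$-critical point. Then there exists a smooth vector field $V$ along $L$ whose radial component $\left\langle V(p),\frac{p-O}{|p-O|}\right\rangle$ is equal to the same positive constant at every $p\in L$, and which points toward the interior of $K$ at every point of $L$.
   Context: $S_r(O)$ denotes the Euclidean sphere of radius $r$ centered at $O$. A point $P\in\partial K\setminus\{O\}$ is called $O$-critical if $\langle O-P, X-P\rangle\geq 0$ for all $X\in K$ (equivalently, the affine hyperplane through $P$ orthogonal to the segment $OP$ is a supporting hyperplane of $K$). "Pointing toward the interior of $K$" at $p$ means that $p+tV(p)$ lies in the interior of $K$ for all sufficiently small $t>0$. *)

theory Defs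
  imports "HOL-Analysis.Analysis"
begin

fun C_k_on :: "nat \<Rightarrow> 'a::real_normed_vector set \<Rightarrow> ('a \<Rightarrow> 'b::real_normed_vector) \<Rightarrow> bool" where
  "C_k_on 0 U f = continuous_on U f"
| "C_k_on (Suc k) U f =
     ((\<forall>x\<in>U. f differentiable (at x)) \<and>
      (\<forall>v. C_k_on k U (\<lambda>x. frechet_derivative f (at x) v)))"

definition smooth_on :: "'a::real_normed_vector set \<Rightarrow> ('a \<Rightarrow> 'b::real_normed_vector) \<Rightarrow> bool" where
  "smooth_on U f \<longleftrightarrow> (\<forall>k. C_k_on k U f)"

definition smooth_along :: "'a::real_normed_vector set \<Rightarrow> ('a \<Rightarrow> 'b::real_normed_vector) \<Rightarrow> bool" where
  "smooth_along L V \<longleftrightarrow> (\<exists>U. open U \<and> L \<subseteq> U \<and> smooth_on U V)"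

definition O_critical :: "'a::euclidean_space set \<Rightarrow> 'a \<Rightarrow> 'a \<Rightarrow> bool" where
  "O_critical K Oc P \<longleftrightarrow> P \<in> rel_frontier K \<and> P \<noteq> Oc \<and> (\<forall>X\<in>K. inner (Oc - P) (X - P) \<ge> 0)"

definition points_inward :: "'a::euclidean_space set \<Rightarrow> 'a \<Rightarrow> 'a \<Rightarrow> bool" where
  "points_inward K p v \<longleftrightarrow> (\<exists>\<epsilon>>0. \<forall>t. 0 < t \<and> t < \<epsilon> \<longrightarrow> p + t *\<^sub>R v \<in> rel_interior K)"

end

theory Submission
  imports Defs
begin


lemma Ck_cong:
  assumes "open U"
  shows "C_k_on k U f \<Longrightarrow> (\<And>x. x \<in> U \<Longrightarrow> f x = g x) \<Longrightarrow> C_k_on k U g"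
proof (induction k arbitrary: f g)
  case 0
  then show ?case using continuous_on_cong by force
next
  case (Suc k)
  have D: "(g has_derivative frechet_derivative f (at x)) (at x) \<and> frechet_derivative g (at x) = frechet_derivative f (at x)"
    if "x \<in> U" for x
  proof -
    have "(f has_derivative frechet_derivative f (at x)) (at x)"
      using Suc.prems that by (simp add: frechet_derivative_works)
    then have "(g has_derivative frechet_derivative f (at x)) (at x)"
      using has_derivative_transform_within_open[OF _ assms that] Suc.prems(2) by blast
    then show ?thesis using frechet_derivative_at by metis
  qed
  show ?case
  proof (simp, intro conjI allI ballI)
    fix x assume "x \<in> U" then show "g differentiable at x" using D differentiable_def by blast
  next
    fix v show "C_k_on k U (\<lambda>x. frechet_derivative g (at x) v)"
      using Suc.IH[of "\<lambda>x. frechet_derivative f (at x) v"] Suc.prems D by simp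
  qed
qed

lemma fd_eq: "(f has_derivative f') (at x) \<Longrightarrow> frechet_derivative f (at x) v = f' v"
  by (drule frechet_derivative_at) simp

lemma fd_works: "x \<in> U \<Longrightarrow> \<forall>x\<in>U. f differentiable at x \<Longrightarrow> (f has_derivative frechet_derivative f (at x)) (at x)"
  using frechet_derivative_works by blast

lemma Ck_Suc: "C_k_on (Suc k) U f \<Longrightarrow> C_k_on k U f"
proof (induction k arbitrary: f)
  case 0
  then show ?case
    by (simp add: continuous_at_imp_continuous_on differentiable_imp_continuous_within)
next
  case (Suc k)
  then show ?case by (metis C_k_on.simps(2))
qed

lemma Ck_const: "C_k_on k U (\<lambda>x. c)"
  by (induction k arbitrary: c) auto

lemma Ck_id: "C_k_on k U (\<lambda>x. x)"
  by (cases k) (auto simp: Ck_const)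

lemma Ck_add:
  assumes "open U"
  shows "C_k_on k U f \<Longrightarrow> C_k_on k U g \<Longrightarrow> C_k_on k U (\<lambda>x. f x + g x)"
proof (induction k arbitrary: f g)
  case 0
  then show ?case by (simp add: continuous_on_add)
next
  case (Suc k)
  have D: "((\<lambda>x. f x + g x) has_derivative (\<lambda>v. frechet_derivative f (at x) v + frechet_derivative g (at x) v)) (at x)"
    if "x \<in> U" for x
    using Suc.prems(1,2) by (intro has_derivative_add fd_works[OF that]) simp_all
  show ?case
  proof (simp, intro conjI allI ballI)
    fix x assume "x \<in> U" then show "(\<lambda>x. f x + g x) differentiable at x" using D differentiable_def by blast
  next
    fix v
    have "C_k_on k U (\<lambda>x. frechet_derivative f (at x) v + frechet_derivative g (at x) v)"
      using Suc.prems by (intro Suc.IH) auto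
    then show "C_k_on k U (\<lambda>x. frechet_derivative (\<lambda>x. f x + g x) (at x) v)"
      by (rule Ck_cong[OF assms]) (simp add: fd_eq[OF D])
  qed
qed

lemma Ck_bilinear:
  fixes prod :: "'b::real_normed_vector \<Rightarrow> 'c::real_normed_vector \<Rightarrow> 'd::real_normed_vector"
    and f :: "'a::real_normed_vector \<Rightarrow> 'b" and g :: "'a \<Rightarrow> 'c"
  assumes "bounded_bilinear prod" "open U"
  shows "C_k_on k U f \<Longrightarrow> C_k_on k U g \<Longrightarrow> C_k_on k U (\<lambda>x. prod (f x) (g x))"
proof (induction k arbitrary: f g)
  case 0
  then show ?case using bounded_bilinear.continuous_on[OF assms(1)] by simp
next
  case (Suc k)
  have D: "((\<lambda>x. prod (f x) (g x)) has_derivative (\<lambda>v. prod (f x) (frechet_derivative g (at x) v) + prod (frechet_derivative f (at x) v) (g x))) (at x)"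
    if "x \<in> U" for x
    using Suc.prems(1,2) by (intro bounded_bilinear.FDERIV[OF assms(1)] fd_works[OF that]) simp_all
  show ?case
  proof (simp only: C_k_on.simps, intro conjI allI ballI)
    fix x assume "x \<in> U" then show "(\<lambda>x. prod (f x) (g x)) differentiable at x" using D differentiable_def by blast
  next
    fix v
    have f1: "C_k_on k U f" "C_k_on k U g" using Suc.prems Ck_Suc by auto
    have f2: "C_k_on k U (\<lambda>x. frechet_derivative f (at x) v)" "C_k_on k U (\<lambda>x. frechet_derivative g (at x) v)"
      using Suc.prems by auto
    have "C_k_on k U (\<lambda>x. prod (f x) (frechet_derivative g (at x) v) + prod (frechet_derivative f (at x) v) (g x))"
      by (rule Ck_add[OF assms(2) Suc.IH[OF f1(1) f2(2)] Suc.IH[OF f2(1) f1(2)]])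
    then show "C_k_on k U (\<lambda>x. frechet_derivative (\<lambda>x. prod (f x) (g x)) (at x) v)"
      by (rule Ck_cong[OF assms(2)]) (simp add: fd_eq[OF D])
  qed
qed

lemma Ck_compose:
  fixes f :: "'a::real_normed_vector \<Rightarrow> real"
  assumes "open U" and hs: "\<And>j y. y \<in> T \<Longrightarrow> (hs j has_real_derivative hs (Suc j) y) (at y)"
    and fT: "\<And>x. x \<in> U \<Longrightarrow> f x \<in> T"
  shows "C_k_on k U f \<Longrightarrow> C_k_on k U (\<lambda>x. hs j (f x))"
proof (induction k arbitrary: j)
  case 0
  have "continuous_on T (hs j)"
    using hs by (meson DERIV_isCont continuous_at_imp_continuous_on)
  then show ?case using 0 fT
    by (simp only: C_k_on.simps) (rule continuous_on_compose2[of T "hs j" U f], auto)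
next
  case (Suc k)
  have D: "((\<lambda>x. hs j (f x)) has_derivative (\<lambda>v. frechet_derivative f (at x) v * hs (Suc j) (f x))) (at x)"
    if "x \<in> U" for x
  proof -
    have "(f has_derivative frechet_derivative f (at x)) (at x)"
      using Suc.prems that by (simp add: frechet_derivative_works)
    moreover have "(hs j has_derivative (\<lambda>h. h * hs (Suc j) (f x))) (at (f x))"
      using hs[OF fT[OF that], of j] unfolding has_field_derivative_def by (simp add: mult.commute[of _ "hs (Suc j) (f x)"])
    ultimately show ?thesis by (rule has_derivative_compose)
  qed
  show ?case
  proof (simp only: C_k_on.simps, intro conjI allI ballI)
    fix x assume "x \<in> U" then show "(\<lambda>x. hs j (f x)) differentiable at x" using D differentiable_def by blast
  next
    fix v
    have "C_k_on k U (\<lambda>x. frechet_derivative f (at x) v * hs (Suc j) (f x))"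
      using Suc Ck_Suc by (intro Ck_bilinear[OF bounded_bilinear_mult assms(1)]) auto
    then show "C_k_on k U (\<lambda>x. frechet_derivative (\<lambda>x. hs j (f x)) (at x) v)"
      by (rule Ck_cong[OF assms(1)]) (simp add: fd_eq[OF D])
  qed
qed

lemma Ck_sum:
  assumes "open U" "finite S"
  shows "(\<And>i. i \<in> S \<Longrightarrow> C_k_on k U (F i)) \<Longrightarrow> C_k_on k U (\<lambda>x. \<Sum>i\<in>S. F i x)"
  using assms(2)
  by (induction S rule: finite_induct) (auto simp: Ck_const intro!: Ck_add[OF assms(1)])

lemma Ck_diff:
  assumes "open U"
  shows "C_k_on k U f \<Longrightarrow> C_k_on k U g \<Longrightarrow> C_k_on k U (\<lambda>x. f x - g x)"
proof -
  assume a: "C_k_on k U f" "C_k_on k U g"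
  have "C_k_on k U (\<lambda>x. f x + (-1::real) *\<^sub>R g x)"
    using a by (intro Ck_add[OF assms] Ck_bilinear[OF bounded_bilinear_scaleR assms] Ck_const)
  then show ?thesis by simp
qed

lemma Ck_exp:
  assumes "open U" "C_k_on k U f"
  shows "C_k_on k U (\<lambda>x. exp (f x :: real))"
  using Ck_compose[OF assms(1), of UNIV "\<lambda>j. exp" f k 0] assms(2)
  by (auto intro: DERIV_exp)

lemma inv_deriv:
  fixes y :: real assumes "y \<in> {0<..}"
  shows "((\<lambda>y. (-1)^j * fact j * inverse y ^ Suc j) has_real_derivative
    ((-1)^Suc j * fact (Suc j) * inverse y ^ Suc (Suc j))) (at y)"
proof -
  have y: "y \<noteq> 0" using assms by auto
  have "((\<lambda>y. (-1)^j * fact j * inverse y ^ Suc j) has_real_derivative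
    ((-1)^j * fact j * (of_nat (Suc j) * inverse y ^ j * (- (inverse y * inverse y))))) (at y)"
    by (intro DERIV_cmult DERIV_cong[OF DERIV_power[OF DERIV_inverse[OF y]]]) (simp add: power2_eq_square)
  moreover have "(-1)^j * fact j * (of_nat (Suc j) * inverse y ^ j * (- (inverse y * inverse y)))
     = ((-1)^Suc j * fact (Suc j) * inverse y ^ Suc (Suc j) :: real)"
    by (simp add: algebra_simps)
  ultimately show ?thesis by (metis (no_types, lifting) DERIV_cong)
qed

lemma Ck_inverse:
  assumes "open U" "C_k_on k U f" "\<And>x. x \<in> U \<Longrightarrow> f x > 0"
  shows "C_k_on k U (\<lambda>x. inverse (f x :: real))"
  using Ck_compose[OF assms(1), of "{0<..}" "\<lambda>j y. (-1)^j * fact j * inverse y ^ Suc j" f k 0] assms(2,3)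
    inv_deriv by auto



lemma exists_good:
  fixes K :: "'a::euclidean_space set"
  assumes "closed K" "convex K" "Oc \<in> K" "p \<in> K" "p \<noteq> Oc" "\<not> O_critical K Oc p"
  shows "\<exists>x\<in>rel_interior K. inner (x - p) (p - Oc) > 0"
proof -
  have "\<exists>y\<in>K. inner (y - p) (p - Oc) > 0"
  proof (cases "p \<in> rel_interior K")
    case True
    then obtain e where e: "e>0" "ball p e \<inter> affine hull K \<subseteq> K" by (auto simp: mem_rel_interior_ball)
    define t where "t = e / (2 * norm (p - Oc))"
    have np: "norm (p - Oc) > 0" using assms by simp
    have t: "t > 0" using e np by (simp add: t_def)
    have "(1 + t) *\<^sub>R p + (-t) *\<^sub>R Oc \<in> affine hull K"
      by (rule mem_affine[OF affine_affine_hull]) (use assms in \<open>auto intro: hull_inc\<close>)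
    moreover have "(1 + t) *\<^sub>R p + (-t) *\<^sub>R Oc = p + t *\<^sub>R (p - Oc)" by (simp add: algebra_simps)
    moreover have "dist p (p + t *\<^sub>R (p - Oc)) = e / 2"
      using np t e by (simp add: dist_norm t_def)
    ultimately have "p + t *\<^sub>R (p - Oc) \<in> K" using e by auto
    moreover have "inner ((p + t *\<^sub>R (p - Oc)) - p) (p - Oc) = t * (norm (p - Oc))^2"
      by (simp add: power2_norm_eq_inner)
    moreover have "t * (norm (p - Oc))^2 > 0" using t np by simp
    ultimately show ?thesis by metis
  next
    case False
    then have "p \<in> rel_frontier K" using assms by (simp add: rel_frontier_def closure_closed)
    then obtain y where y: "y \<in> K" "inner (Oc - p) (y - p) < 0" using assms(5,6) by (auto simp: O_critical_def not_le)
    have "inner (y - p) (p - Oc) = - inner (Oc - p) (y - p)"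
      by (metis inner_commute inner_minus_right minus_diff_eq)
    then have "0 < inner (y - p) (p - Oc)" using y(2) by linarith
    then show ?thesis using y(1) by blast
  qed
  then obtain y where y: "y \<in> K" "inner (y - p) (p - Oc) > 0" by blast
  define a where "a = inner (y - p) (p - Oc)"
  have a: "a > 0" using y by (simp add: a_def)
  obtain q where q: "q \<in> rel_interior K" using rel_interior_eq_empty[OF assms(2)] assms(3) by blast
  define b where "b = inner (y - q) (p - Oc)"
  define e where "e = min 1 (a / (2 * (\<bar>b\<bar> + 1)))"
  have e0: "e > 0" "e \<le> 1" using a by (auto simp: e_def)
  have x: "y - e *\<^sub>R (y - q) \<in> rel_interior K"
    using rel_interior_closure_convex_shrink[OF assms(2) q _ e0] y assms(1) by (simp add: closure_closed)
  have eq: "inner ((y - e *\<^sub>R (y - q)) - p) (p - Oc) = a - e * b"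
    by (simp add: a_def b_def inner_diff_left)
  have "e * \<bar>b\<bar> \<le> (a / (2 * (\<bar>b\<bar> + 1))) * \<bar>b\<bar>"
    by (intro mult_right_mono) (auto simp: e_def)
  also have "\<dots> < a"
    using a abs_ge_zero[of b] by (simp add: field_simps) (smt (verit) mult_nonneg_nonneg)
  finally have "e * b < a" using e0 by (smt (verit) abs_ge_self mult_left_mono)
  then show ?thesis using x eq by (intro bexI[of _ "y - e *\<^sub>R (y - q)"]) auto
qed

theorem mainTheorem4:
  fixes K :: "'a::euclidean_space set" and Oc :: 'a and r :: real
  assumes "closed K" and "convex K" and "aff_dim K \<ge> 2"
    and "Oc \<in> rel_frontier K" and "r > 0"
    and "\<forall>P\<in>sphere Oc r \<inter> K. \<not> O_critical K Oc P"
  shows "\<exists>V :: 'a \<Rightarrow> 'a. smooth_along (sphere Oc r \<inter> K) V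
           \<and> (\<exists>c>0. \<forall>p\<in>sphere Oc r \<inter> K. inner (V p) ((1 / norm (p - Oc)) *\<^sub>R (p - Oc)) = c)
           \<and> (\<forall>p\<in>sphere Oc r \<inter> K. points_inward K p (V p))"
proof -
  let ?L = "sphere Oc r \<inter> K"
  define g where "g x p = inner (x - p) (p - Oc)" for x p :: 'a
  have OcK: "Oc \<in> K" using assms(1,4) by (simp add: rel_frontier_def closure_closed)
  have normL: "norm (p - Oc) = r" if "p \<in> ?L" for p
    using that by (simp add: dist_norm norm_minus_commute)
  show ?thesis
  proof (cases "?L = {}")
    case True
    have "smooth_along ?L (\<lambda>_. 0::'a)"
      unfolding smooth_along_def smooth_on_def using Ck_const by (intro exI[of _ UNIV]) auto
    then show ?thesis using True by (intro exI[of _ "\<lambda>_. 0"] conjI exI[of _ "1::real"]) auto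
  next
    case False
    have good: "\<exists>x\<in>rel_interior K. g x p > 0" if "p \<in> ?L" for p
      using exists_good[OF assms(1,2) OcK, of p] assms(5,6) that normL[OF that] by (auto simp: g_def)
    have cL: "compact ?L" using assms(1) by (simp add: compact_Int_closed)
    obtain D where D: "D \<subseteq> rel_interior K \<times> {0<..}" "finite D"
      "?L \<subseteq> (\<Union>c\<in>D. (\<lambda>(x,d). {p. d < g x p}) c)"
    proof (rule compactE_image[OF cL, of "rel_interior K \<times> {0<..}" "\<lambda>(x,d). {p. d < g x p}"])
      fix T assume "T \<in> rel_interior K \<times> {0::real<..}"
      obtain x d where T: "T = (x, d)" by force
      show "open ((\<lambda>(x,d). {p. d < g x p}) T)"
        unfolding T g_def by (simp, intro open_Collect_less continuous_intros)
    next
      show "?L \<subseteq> (\<Union>c\<in>rel_interior K \<times> {0<..}. (\<lambda>(x,d). {p. d < g x p}) c)"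
      proof
        fix p assume p: "p \<in> ?L"
        then obtain x where x: "x \<in> rel_interior K" "g x p > 0" using good by blast
        then show "p \<in> (\<Union>c\<in>rel_interior K \<times> {0<..}. (\<lambda>(x,d). {p. d < g x p}) c)"
          by (intro UN_I[of "(x, g x p / 2)"]) auto
      qed
    qed blast
    have Dne: "D \<noteq> {}" using D(3) False by auto
    define X where "X = fst ` D"
    define \<delta> where "\<delta> = Min (snd ` D)"
    have X: "finite X" "X \<subseteq> rel_interior K" "X \<noteq> {}" using D Dne by (auto simp: X_def)
    have \<delta>: "\<delta> > 0" using D Dne Min_in[of "snd ` D"] by (force simp: \<delta>_def)
    have hcov: "\<exists>x\<in>X. \<delta> < g x p" if pL: "p \<in> ?L" for p
    proof -
      obtain c where c: "c \<in> D" "p \<in> (\<lambda>(x,d). {p. d < g x p}) c" using D(3) pL by blast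
      obtain x d where cxd: "c = (x, d)" by force
      have xd: "(x,d) \<in> D" "d < g x p" using c cxd by auto
      have "\<delta> \<le> d" unfolding \<delta>_def using xd(1) D(2) by (intro Min_le) force+
      then show ?thesis using xd by (force simp: X_def)
    qed
    define B where "B = ((\<Sum>x\<in>X. norm (x - Oc)) + r) * r"
    have B0: "B \<ge> 0" using assms(5) by (simp add: B_def sum_nonneg)
    have hB: "- B \<le> g x p" if "x \<in> X" "p \<in> ?L" for x p
    proof -
      have "\<bar>g x p\<bar> \<le> norm (x - p) * norm (p - Oc)" unfolding g_def by (rule Cauchy_Schwarz_ineq2)
      also have "\<dots> \<le> (norm (x - Oc) + r) * r"
      proof -
        have "norm (x - p) \<le> norm (x - Oc) + norm (p - Oc)" using norm_triangle_ineq4[of "x - Oc" "p - Oc"] by simp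
        then show ?thesis using normL[OF that(2)] assms(5) by (simp add: mult_right_mono)
      qed
      also have "\<dots> \<le> B" unfolding B_def using assms(5) X(1) that(1)
        by (intro mult_right_mono add_right_mono member_le_sum) auto
      finally show ?thesis by linarith
    qed
    define N where "N = card X"
    define M where "M = (real N * B + 1) / \<delta>^2"
    have M0: "M \<ge> 0" using B0 by (simp add: M_def)
    define W where "W p = (\<Sum>x\<in>X. exp (M * g x p) *\<^sub>R (x - p))" for p
    define den where "den p = inner (W p) (p - Oc)" for p
    have den_eq: "den p = (\<Sum>x\<in>X. exp (M * g x p) * g x p)" for p
      by (simp add: den_def W_def inner_sum_left g_def)
    have den_pos: "den p > 0" if p: "p \<in> ?L" for p
    proof -
      obtain x0 where x0: "x0 \<in> X" "\<delta> < g x0 p" using hcov[OF p] by blast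
      have "real N * B + 1 = M * \<delta>^2" using \<delta> by (simp add: M_def)
      also have "\<dots> < (1 + M * \<delta>) * \<delta>" using \<delta> by (simp add: power2_eq_square algebra_simps)
      also have "\<dots> \<le> exp (M * \<delta>) * \<delta>" using \<delta> exp_ge_add_one_self[of "M*\<delta>"] by (intro mult_right_mono) auto
      also have "\<dots> \<le> exp (M * g x0 p) * g x0 p"
        using \<delta> x0 M0 by (intro mult_mono) (auto intro: mult_left_mono)
      finally have t0: "real N * B + 1 < exp (M * g x0 p) * g x0 p" .
      have tj: "- B \<le> exp (M * g x p) * g x p" if "x \<in> X" for x
      proof (cases "g x p \<ge> 0")
        case True then show ?thesis using B0 mult_nonneg_nonneg[OF exp_ge_zero True, of "M * g x p"] by linarith
      next
        case False
        then have "exp (M * g x p) \<le> 1" using M0 by (simp add: mult_nonneg_nonpos)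
        then have "exp (M * g x p) * g x p \<ge> g x p" using False
          by (smt (verit) mult_right_mono_neg mult_cancel_right1)
        then show ?thesis using hB[OF that p] by linarith
      qed
      have "den p = exp (M * g x0 p) * g x0 p + (\<Sum>x\<in>X - {x0}. exp (M * g x p) * g x p)"
        unfolding den_eq using X(1) x0(1) by (simp add: sum.remove)
      moreover have "(\<Sum>x\<in>X - {x0}. exp (M * g x p) * g x p) \<ge> (\<Sum>x\<in>X - {x0}. - B)"
        using tj by (intro sum_mono) auto
      moreover have "(\<Sum>x\<in>X - {x0}. - B) \<ge> - (real N * B)"
        using B0 X(1) x0(1) by (simp add: N_def card_Diff_singleton mult_right_mono)
      ultimately show ?thesis using t0 by linarith
    qed
    have Cg: "C_k_on k U' (g x)" if "open U'" for k U' x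
      unfolding g_def by (intro Ck_bilinear[OF bounded_bilinear_inner that] Ck_diff[OF that] Ck_const Ck_id)
    have CW: "C_k_on k U' W" if "open U'" for k U'
      unfolding W_def
      by (intro Ck_sum[OF that X(1)] Ck_bilinear[OF bounded_bilinear_scaleR that] Ck_diff[OF that]
          Ck_exp[OF that] Ck_bilinear[OF bounded_bilinear_mult that] Ck_const Ck_id Cg that)
    have Cden: "C_k_on k U' den" if "open U'" for k U'
      unfolding den_def
      by (intro Ck_bilinear[OF bounded_bilinear_inner that] Ck_diff[OF that] CW Ck_const Ck_id that)
    define U where "U = {p. 0 < den p}"
    have oU: "open U" unfolding U_def
      using Cden[of UNIV 0] by (intro open_Collect_less continuous_on_const) auto
    define V where "V p = (r * inverse (den p)) *\<^sub>R W p" for p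
    have sm: "smooth_along ?L V"
      unfolding smooth_along_def smooth_on_def
    proof (intro exI[of _ U] conjI allI)
      show "?L \<subseteq> U" using den_pos by (auto simp: U_def)
      fix k show "C_k_on k U V"
        unfolding V_def
        by (intro Ck_bilinear[OF bounded_bilinear_scaleR oU] Ck_bilinear[OF bounded_bilinear_mult oU]
            Ck_inverse[OF oU] Ck_const CW Cden oU) (auto simp: U_def)
    qed (fact oU)
    have rad: "inner (V p) ((1 / norm (p - Oc)) *\<^sub>R (p - Oc)) = 1" if "p \<in> ?L" for p
    proof -
      have "inner (V p) ((1 / norm (p - Oc)) *\<^sub>R (p - Oc)) = (r * inverse (den p)) * ((1/r) * den p)"
        unfolding V_def inner_scaleR_left inner_scaleR_right normL[OF that] den_def[symmetric] by simp
      also have "\<dots> = 1" using den_pos[OF that] assms(5) by (simp add: field_simps)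
      finally show ?thesis .
    qed
    have inw: "points_inward K p (V p)" if p: "p \<in> ?L" for p
    proof -
      define w where "w x = exp (M * g x p)" for x
      define S where "S = sum w X"
      have S: "S > 0" unfolding S_def w_def using X by (intro sum_pos) auto
      define xb where "xb = (\<Sum>x\<in>X. (w x / S) *\<^sub>R x)"
      have xb: "xb \<in> rel_interior K" unfolding xb_def
        using X S assms(2) by (intro convex_sum[OF X(1) convex_rel_interior]) (auto simp: S_def w_def sum_divide_distrib[symmetric])
      have "S *\<^sub>R xb = (\<Sum>x\<in>X. w x *\<^sub>R x)"
        using S by (simp add: xb_def scaleR_sum_right)
      then have Wp: "W p = S *\<^sub>R (xb - p)"
        by (simp add: W_def w_def[symmetric] scaleR_diff_right sum_subtractf S_def scaleR_sum_left)
      define l where "l = r * inverse (den p) * S"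
      have l: "l > 0" using S den_pos[OF p] assms(5) by (simp add: l_def)
      have Vp: "V p = l *\<^sub>R (xb - p)" by (simp add: V_def Wp l_def)
      show ?thesis unfolding points_inward_def
      proof (intro exI[of _ "1 / l"] conjI allI impI)
        show "0 < 1 / l" using l by simp
        fix t assume t: "0 < t \<and> t < 1 / l"
        have "p - (t * l) *\<^sub>R (p - xb) \<in> rel_interior K"
          using t l p assms(1) by (intro rel_interior_closure_convex_shrink[OF assms(2) xb])
             (auto simp: closure_closed field_simps)
        moreover have "p - (t * l) *\<^sub>R (p - xb) = p + t *\<^sub>R V p"
          by (simp add: Vp algebra_simps)
        ultimately show "p + t *\<^sub>R V p \<in> rel_interior K" by simp
      qed
    qed
    have "(\<exists>c>0. \<forall>p\<in>?L. inner (V p) ((1 / norm (p - Oc)) *\<^sub>R (p - Oc)) = c)"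
      using rad by (intro exI[of _ "1::real"] conjI zero_less_one ballI) blast
    then show ?thesis using sm inw by blast
  qed
qed

end
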